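(* Consider the setting in the context, with window size $w$ and threshold $b>0$. If $\widehat{I}>0$, then the stopping time $\tau_u(b):=\inf\{n>w:U_n\ge b\}$ satisfies $\tau_u(b)<\infty$ almost surely under $\mathbb{P}_1$.
   Context: Let $X_1,X_2,\dots\in\mathbb{R}^d$ be independent; under $\mathbb{P}_1$ (change-point $\nu=1$, expectation $\mathbb{E}_1$) they are i.i.d. with density $p_1$; $p_0$ is a known density; both w.r.t. a dominating measure $\mu$. A fixed density estimation procedure maps a finite collection of observations to a density w.r.t. $\mu$; for a positive integer $w$ and $n>w$, $\widehat{p}^w_n$ is its output on $X_{n-w},\dots,X_{n-1}$. Let $\widehat{Z}^w_n:=\log(\widehat{p}^w_n(X_n)/p_0(X_n))$ for $n>w$, $\widehat{I}:=\mathbb{E}_1[\widehat{Z}^w_n]$ (the same for all $n>w$), and $U_1=\dots=U_w=0$, $U_n=U_{n-1}+\widehat{Z}^w_n$ for $n>w$. *)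

theory Defs
  imports "HOL-Probability.Probability"
begin

definition Zhat :: "('b list \<Rightarrow> 'b \<Rightarrow> real) \<Rightarrow> ('b \<Rightarrow> real) \<Rightarrow> (nat \<Rightarrow> 'a \<Rightarrow> 'b) \<Rightarrow> nat \<Rightarrow> nat \<Rightarrow> 'a \<Rightarrow> real" where
  "Zhat est p0 X w n \<omega> = ln (est (map (\<lambda>i. X i \<omega>) [n - w..<n]) (X n \<omega>) / p0 (X n \<omega>))"

definition Ustat :: "('b list \<Rightarrow> 'b \<Rightarrow> real) \<Rightarrow> ('b \<Rightarrow> real) \<Rightarrow> (nat \<Rightarrow> 'a \<Rightarrow> 'b) \<Rightarrow> nat \<Rightarrow> nat \<Rightarrow> 'a \<Rightarrow> real" where
  "Ustat est p0 X w n \<omega> = (\<Sum>k\<in>{w<..n}. Zhat est p0 X w k \<omega>)"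

text \<open>tau_u(b) = inf { n > w : U_n >= b } (infimum of the empty set is infinity).\<close>
definition tau_u :: "('b list \<Rightarrow> 'b \<Rightarrow> real) \<Rightarrow> ('b \<Rightarrow> real) \<Rightarrow> (nat \<Rightarrow> 'a \<Rightarrow> 'b) \<Rightarrow> nat \<Rightarrow> real \<Rightarrow> 'a \<Rightarrow> enat" where
  "tau_u est p0 X w b \<omega> = (INF n \<in> {n. w < n \<and> b \<le> Ustat est p0 X w n \<omega>}. enat n)"

end

theory Submission imports Defs begin
lemma (in prob_space) indep_sets_reindex:
  assumes inj: "inj_on f I" and ind: "indep_sets F (f ` I)"
  shows "indep_sets (\<lambda>i. F (f i)) I"
  unfolding indep_sets_def
proof (intro conjI ballI allI impI)
  fix i assume "i \<in> I"
  then show "F (f i) \<subseteq> events" using ind unfolding indep_sets_def by auto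
next
  fix J A assume J: "J \<subseteq> I" "J \<noteq> {}" "finite J" and A: "A \<in> Pi J (\<lambda>i. F (f i))"
  define g where "g = inv_into J f"
  have injJ: "inj_on f J" using inj J inj_on_subset by blast
  have gf: "\<And>j. j \<in> J \<Longrightarrow> g (f j) = j" unfolding g_def using injJ by (simp add: inv_into_f_f)
  have AP: "(\<lambda>y. A (g y)) \<in> Pi (f ` J) F" using A gf by (auto simp: Pi_iff)
  have "prob (\<Inter>y\<in>f ` J. A (g y)) = (\<Prod>y\<in>f ` J. prob (A (g y)))"
    using ind J AP unfolding indep_sets_def apply (elim conjE) apply (drule spec[of _ "f ` J"]) by auto
  moreover have "(\<Inter>y\<in>f ` J. A (g y)) = (\<Inter>j\<in>J. A j)" using gf by auto
  moreover have "(\<Prod>y\<in>f ` J. prob (A (g y))) = (\<Prod>j\<in>J. prob (A j))"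
    using gf injJ by (simp add: prod.reindex)
  ultimately show "prob (\<Inter>j\<in>J. A j) = (\<Prod>j\<in>J. prob (A j))" by simp
qed

lemma (in prob_space) indep_vars_reindex:
  assumes inj: "inj_on f I" and ind: "indep_vars M' X (f ` I)"
  shows "indep_vars (\<lambda>i. M' (f i)) (\<lambda>i. X (f i)) I"
  using ind indep_sets_reindex[OF inj, of "\<lambda>i. { X i -` A \<inter> space M | A. A \<in> sets (M' i)}"]
  unfolding indep_vars_def2 by auto

theorem lemma7:
  fixes M :: "'a measure" and N :: "'b measure"
    and X :: "nat \<Rightarrow> 'a \<Rightarrow> 'b"
    and p0 p1 :: "'b \<Rightarrow> real"
    and est :: "'b list \<Rightarrow> 'b \<Rightarrow> real"
    and w :: nat and b :: real
  assumes P1: "prob_space M"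
    and X_meas: "\<And>i. i \<ge> 1 \<Longrightarrow> X i \<in> measurable M N"
    and X_indep: "prob_space.indep_vars M (\<lambda>_. N) X {1..}"
    and X_distr: "\<And>i. i \<ge> 1 \<Longrightarrow> distr M N (X i) = density N (\<lambda>x. ennreal (p1 x))"
    and p1_meas: "p1 \<in> borel_measurable N" and p1_nonneg: "\<And>x. x \<in> space N \<Longrightarrow> p1 x \<ge> 0"
    and p0_meas: "p0 \<in> borel_measurable N" and p0_nonneg: "\<And>x. x \<in> space N \<Longrightarrow> p0 x \<ge> 0"
    and p0_density: "(\<integral>\<^sup>+ x. ennreal (p0 x) \<partial>N) = 1"
    and est_density: "\<And>xs. set xs \<subseteq> space N \<Longrightarrow>
        (\<lambda>x. est xs x) \<in> borel_measurable N \<and> (\<forall>x\<in>space N. est xs x \<ge> 0)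
        \<and> (\<integral>\<^sup>+ x. ennreal (est xs x) \<partial>N) = 1"
    and est_meas: "(\<lambda>v. est (map v [0..<w]) (v w)) \<in> borel_measurable (PiM {..w} (\<lambda>_. N))"
    and w_pos: "w \<ge> 1"
    and b_pos: "b > 0"
    and Z_int: "integrable M (Zhat est p0 X w (w + 1))"
    and I_pos: "(\<integral>\<omega>. Zhat est p0 X w (w + 1) \<omega> \<partial>M) > 0"
  shows "AE \<omega> in M. tau_u est p0 X w b \<omega> < \<infinity>"
proof -
  interpret prob_space M by (rule P1)
  note [measurable] = p0_meas p1_meas est_meas
  define P where "P = PiM {..w} (\<lambda>_. N)"
  define D where "D = PiM {..w} (\<lambda>_. density N (\<lambda>x. ennreal (p1 x)))"
  define G where "G = (\<lambda>v::nat\<Rightarrow>'b. ln (est (map v [0..<w]) (v w) / p0 (v w)))"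
  define V where "V = (\<lambda>k \<omega>. \<lambda>j\<in>{..w}. X (k - w + j) \<omega>)"
  have G_meas[measurable]: "G \<in> borel_measurable P"
    unfolding G_def P_def by measurable
  have V_meas: "V k \<in> measurable M P" if "k > w" for k
    unfolding V_def P_def using that by (intro measurable_restrict X_meas) auto
  have Z_eq: "Zhat est p0 X w k \<omega> = G (V k \<omega>)" if "k \<ge> w" for k \<omega>
  proof -
    have "map (\<lambda>i. X i \<omega>) [k - w..<k] = map (V k \<omega>) [0..<w]"
      by (rule nth_equalityI) (use that in \<open>auto simp: V_def\<close>)
    moreover have "V k \<omega> w = X k \<omega>" using that by (simp add: V_def)
    ultimately show ?thesis by (simp add: Zhat_def G_def)
  qed
  have distrV: "distr M P (V k) = D" if "k > w" for k
  proof -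
    have inj: "inj_on (\<lambda>j. k - w + j) {..w}" by (auto simp: inj_on_def)
    have img: "(\<lambda>j. k - w + j) ` {..w} \<subseteq> {1..}" using that by auto
    have "indep_vars (\<lambda>_. N) X ((\<lambda>j. k - w + j) ` {..w})"
      by (rule indep_vars_subset[OF X_indep img])
    then have ind: "indep_vars (\<lambda>_. N) (\<lambda>j. X (k - w + j)) {..w}"
      using indep_vars_reindex[OF inj] by auto
    have rv: "random_variable N (X (k - w + j))" for j using that by (intro X_meas) auto
    have "distr M P (V k) = (\<Pi>\<^sub>M j\<in>{..w}. distr M N (X (k - w + j)))"
      using indep_vars_iff_distr_eq_PiM[where I="{..w}" and M'="\<lambda>_. N" and X="\<lambda>j. X (k - w + j)", OF _ rv] ind
      by (simp add: P_def V_def)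
    also have "\<dots> = D" unfolding D_def
      by (rule PiM_cong) (use that in \<open>auto intro!: X_distr\<close>)
    finally show ?thesis .
  qed
  have indepV: "indep_var P (V k) P (V l)" if "w < k" "k + w < l" for k l
  proof -
    define A where "A = {k - w..k}"
    define B where "B = {l - w..l}"
    have ir: "indep_var (PiM A (\<lambda>_. N)) (\<lambda>\<omega>. restrict (\<lambda>i. X i \<omega>) A) (PiM B (\<lambda>_. N)) (\<lambda>\<omega>. restrict (\<lambda>i. X i \<omega>) B)"
      by (rule indep_var_restrict[OF X_indep]) (use that in \<open>auto simp: A_def B_def\<close>)
    have sh: "(\<lambda>f. \<lambda>j\<in>{..w}. f (m - w + j)) \<in> measurable (PiM {m - w..m} (\<lambda>_. N)) P" if "m \<ge> w" for m
      unfolding P_def using that by (intro measurable_restrict measurable_component_singleton) auto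
    have "indep_var P ((\<lambda>f. \<lambda>j\<in>{..w}. f (k - w + j)) \<circ> (\<lambda>\<omega>. restrict (\<lambda>i. X i \<omega>) A))
       P ((\<lambda>f. \<lambda>j\<in>{..w}. f (l - w + j)) \<circ> (\<lambda>\<omega>. restrict (\<lambda>i. X i \<omega>) B))"
      by (rule indep_var_compose[OF ir]) (use sh[of k] sh[of l] that in \<open>auto simp: A_def B_def\<close>)
    moreover have "((\<lambda>f. \<lambda>j\<in>{..w}. f (k - w + j)) \<circ> (\<lambda>\<omega>. restrict (\<lambda>i. X i \<omega>) A)) = V k"
      using that by (auto simp: V_def A_def fun_eq_iff)
    moreover have "((\<lambda>f. \<lambda>j\<in>{..w}. f (l - w + j)) \<circ> (\<lambda>\<omega>. restrict (\<lambda>i. X i \<omega>) B)) = V l"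
      using that by (auto simp: V_def B_def fun_eq_iff)
    ultimately show ?thesis by simp
  qed
  define Z where "Z = Zhat est p0 X w"
  have Z_meas: "Z k \<in> borel_measurable M" if "k > w" for k
  proof -
    have "Z k = (\<lambda>\<omega>. G (V k \<omega>))" using that by (auto simp: Z_def Z_eq fun_eq_iff)
    then show ?thesis using measurable_compose[OF V_meas[OF that] G_meas] by simp
  qed
  have U_meas: "Ustat est p0 X w n \<in> borel_measurable M" if "n > w" for n
    unfolding Ustat_def using Z_meas by (intro borel_measurable_sum) (auto simp: Z_def)
  define E where "E = {\<omega>\<in>space M. \<forall>n. w < n \<longrightarrow> Ustat est p0 X w n \<omega> < b}"
  have same_int: "integral\<^sup>L M (\<lambda>\<omega>. h (Z k \<omega>)) = integral\<^sup>L D (\<lambda>v. h (G v))"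
    "integrable M (\<lambda>\<omega>. h (Z k \<omega>)) \<longleftrightarrow> integrable D (\<lambda>v. h (G v))"
    if "k > w" "h \<in> borel_measurable borel" for h :: "real \<Rightarrow> real" and k
  proof -
    have eq: "(\<lambda>\<omega>. h (Z k \<omega>)) = (\<lambda>\<omega>. h (G (V k \<omega>)))" using that by (auto simp: Z_def Z_eq fun_eq_iff)
    have hm: "(\<lambda>v. h (G v)) \<in> borel_measurable P" using measurable_compose[OF G_meas that(2)] by simp
    show "integral\<^sup>L M (\<lambda>\<omega>. h (Z k \<omega>)) = integral\<^sup>L D (\<lambda>v. h (G v))"
      unfolding eq using integral_distr[OF V_meas[OF that(1)] hm] distrV[OF that(1)] by simp
    show "integrable M (\<lambda>\<omega>. h (Z k \<omega>)) \<longleftrightarrow> integrable D (\<lambda>v. h (G v))"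
      unfolding eq using integrable_distr_eq[OF V_meas[OF that(1)] hm] distrV[OF that(1)] by simp
  qed
  have intG: "integrable D G"
    using Z_int same_int(2)[of "w+1" "\<lambda>x. x"] by (simp add: Z_def)
  define I where "I = integral\<^sup>L D G"
  have I_pos': "I > 0" using I_pos same_int(1)[of "w+1" "\<lambda>x. x"] by (simp add: Z_def I_def)
  have DP: "sets D = sets P" unfolding D_def P_def by (intro sets_PiM_cong) auto
  have G_measD[measurable]: "G \<in> borel_measurable D" using G_meas by (simp add: measurable_cong_sets[OF DP refl])
  define cl where "cl = (\<lambda>K z::real. max (-K) (min z K))"
  have cl_meas[measurable]: "cl K \<in> borel_measurable borel" for K unfolding cl_def by measurable
  have cl_bound: "\<bar>cl K z\<bar> \<le> K" if "K \<ge> 0" for K z using that by (auto simp: cl_def)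
  have cl_diff: "\<bar>z - cl K z\<bar> \<le> \<bar>z\<bar>" if "K \<ge> 0" for K z using that by (auto simp: cl_def)
  have lim: "(\<lambda>n. integral\<^sup>L D (\<lambda>v. \<bar>G v - cl (real n) (G v)\<bar>)) \<longlonglongrightarrow> integral\<^sup>L D (\<lambda>v. 0)"
  proof (rule integral_dominated_convergence[where w="\<lambda>v. \<bar>G v\<bar>"])
    show "integrable D (\<lambda>v. \<bar>G v\<bar>)" using intG by simp
    show "AE x in D. (\<lambda>n. \<bar>G x - cl (real n) (G x)\<bar>) \<longlonglongrightarrow> 0"
    proof (intro AE_I2 tendsto_eventually)
      fix x
      show "\<forall>\<^sub>F n in sequentially. \<bar>G x - cl (real n) (G x)\<bar> = 0"
        unfolding eventually_sequentially
      proof (intro exI allI impI)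
        fix n assume "nat \<lceil>\<bar>G x\<bar>\<rceil> \<le> n"
        then have "\<bar>G x\<bar> \<le> real n" by linarith
        then show "\<bar>G x - cl (real n) (G x)\<bar> = 0" by (auto simp: cl_def)
      qed
    qed
    show "AE x in D. norm \<bar>G x - cl (real n) (G x)\<bar> \<le> \<bar>G x\<bar>" for n
      using cl_diff by simp
  qed auto
  have key: "measure M E \<le> e" if "e > 0" for e
  proof -
    define \<delta> where "\<delta> = min (I/4) (e*I/8)"
    have \<delta>_pos: "\<delta> > 0" using I_pos' that by (simp add: \<delta>_def)
    obtain n0 where n0: "\<And>n. n \<ge> n0 \<Longrightarrow> integral\<^sup>L D (\<lambda>v. \<bar>G v - cl (real n) (G v)\<bar>) < \<delta>"
      using order_tendstoD(2)[OF lim, of \<delta>] \<delta>_pos by (auto simp: eventually_sequentially)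
    define K where "K = real (Suc n0)"
    have K_pos: "K > 0" by (simp add: K_def)
    have Rint: "integral\<^sup>L D (\<lambda>v. \<bar>G v - cl K (G v)\<bar>) < \<delta>" unfolding K_def by (intro n0) auto
    have PD: "prob_space D" using prob_space_distr[OF V_meas[of "w+1"]] distrV[of "w+1"] by simp
    have intclD: "integrable D (\<lambda>v. cl K (G v))"
      using cl_bound K_pos by (intro finite_measure.integrable_const_bound[OF prob_space.axioms(1)[OF PD], where B=K]) auto
    define \<mu> where "\<mu> = integral\<^sup>L D (\<lambda>v. cl K (G v))"
    have "I - \<mu> = integral\<^sup>L D (\<lambda>v. G v - cl K (G v))"
      unfolding I_def \<mu>_def using intG intclD by (simp add: integral_diff)
    also have "\<bar>\<dots>\<bar> \<le> integral\<^sup>L D (\<lambda>v. \<bar>G v - cl K (G v)\<bar>)" by (rule integral_abs_bound)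
    finally have \<mu>I: "\<bar>I - \<mu>\<bar> < \<delta>" using Rint by linarith
    have "\<delta> \<le> I/4" unfolding \<delta>_def by simp
    then have \<mu>_ge: "\<mu> \<ge> 3 * I / 4" using \<mu>I by linarith
    have \<mu>_abs: "\<bar>\<mu>\<bar> \<le> K"
    proof -
      have "\<bar>\<mu>\<bar> \<le> integral\<^sup>L D (\<lambda>v. \<bar>cl K (G v)\<bar>)" unfolding \<mu>_def by (rule integral_abs_bound)
      also have "\<dots> \<le> integral\<^sup>L D (\<lambda>v. K)"
        using intclD cl_bound K_pos prob_space.axioms(1)[OF PD]
        by (intro integral_mono) (auto intro: finite_measure.integrable_const)
      also have "\<dots> = K" using PD by (simp add: prob_space.prob_space)
      finally show ?thesis .
    qed
    define W where "W = (\<lambda>k \<omega>. cl K (Z k \<omega>) - \<mu>)"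
    define R where "R = (\<lambda>k \<omega>. Z k \<omega> - cl K (Z k \<omega>))"
    have W_meas: "W k \<in> borel_measurable M" if "k > w" for k
      unfolding W_def using Z_meas[OF that] by measurable
    have W_bound: "\<bar>W k \<omega>\<bar> \<le> 2 * K" for k \<omega>
      using cl_bound[of K "Z k \<omega>"] \<mu>_abs K_pos unfolding W_def by linarith
    have W_int: "integrable M (W k)" if "k > w" for k
      using W_meas[OF that] W_bound by (intro integrable_const_bound[where B="2*K"]) auto
    have WW_int: "integrable M (\<lambda>\<omega>. W i \<omega> * W j \<omega>)" if "i > w" "j > w" for i j
    proof (intro integrable_const_bound[where B="2*K*(2*K)"])
      show "AE x in M. norm (W i x * W j x) \<le> 2 * K * (2 * K)"
      proof (intro AE_I2)
        fix x
        have "\<bar>W i x\<bar> * \<bar>W j x\<bar> \<le> (2 * K) * (2 * K)" using W_bound K_pos by (intro mult_mono) auto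
        then show "norm (W i x * W j x) \<le> 2 * K * (2 * K)" by (simp add: abs_mult)
      qed
    qed (use W_meas[OF that(1)] W_meas[OF that(2)] in measurable)
    have W_int0: "integral\<^sup>L M (W k) = 0" if "k > w" for k
    proof -
      have "integral\<^sup>L M (W k) = integral\<^sup>L D (\<lambda>v. cl K (G v) - \<mu>)"
        unfolding W_def by (rule same_int(1)[OF that]) measurable
      also have "\<dots> = integral\<^sup>L D (\<lambda>v. cl K (G v)) - integral\<^sup>L D (\<lambda>v. \<mu>)"
        using intclD finite_measure.integrable_const[OF prob_space.axioms(1)[OF PD], of \<mu>] by (rule Bochner_Integration.integral_diff)
      also have "\<dots> = 0" using PD by (simp add: \<mu>_def prob_space.prob_space)
      finally show ?thesis .
    qed
    have W_indep: "integral\<^sup>L M (\<lambda>\<omega>. W i \<omega> * W j \<omega>) = 0" if "w < i" "i + w < j" for i j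
    proof -
      define h where "h = (\<lambda>v. cl K (G v) - \<mu>)"
      have hm: "h \<in> borel_measurable P" unfolding h_def by measurable
      have Wh: "W k = h \<circ> V k" if "k \<ge> w" for k
        using that by (auto simp: W_def h_def Z_def Z_eq fun_eq_iff)
      have "indep_var borel (h \<circ> V i) borel (h \<circ> V j)"
        by (rule indep_var_compose[OF indepV[OF that] hm hm])
      then have "indep_var borel (W i) borel (W j)" using Wh that by simp
      then have "integral\<^sup>L M (\<lambda>\<omega>. W i \<omega> * W j \<omega>) = integral\<^sup>L M (W i) * integral\<^sup>L M (W j)"
        using W_int that by (intro indep_var_lebesgue_integral) auto
      then show ?thesis using W_int0 that by simp
    qed
    have WW_le: "integral\<^sup>L M (\<lambda>\<omega>. W i \<omega> * W j \<omega>) \<le> 4 * K\<^sup>2" if "i > w" "j > w" for i j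
    proof -
      have "integral\<^sup>L M (\<lambda>\<omega>. W i \<omega> * W j \<omega>) \<le> integral\<^sup>L M (\<lambda>\<omega>. 4 * K\<^sup>2)"
      proof (intro integral_mono WW_int that)
        show "integrable M (\<lambda>\<omega>. 4 * K\<^sup>2)" by simp
        fix \<omega> have "W i \<omega> * W j \<omega> \<le> \<bar>W i \<omega>\<bar> * \<bar>W j \<omega>\<bar>" by (simp add: abs_mult[symmetric])
        also have "\<dots> \<le> (2 * K) * (2 * K)" using W_bound K_pos by (intro mult_mono) auto
        finally show "W i \<omega> * W j \<omega> \<le> 4 * K\<^sup>2" by (simp add: power2_eq_square)
      qed
      then show ?thesis by (simp add: prob_space)
    qed
    define m :: nat where "m = nat \<lceil>4*b/I + 128*(2*w+1)*K\<^sup>2/(I\<^sup>2*e)\<rceil> + 1"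
    have q1: "4*b/I \<ge> 0" using b_pos I_pos' by simp
    have q2: "128*(2*w+1)*K\<^sup>2/(I\<^sup>2*e) \<ge> 0" using that by simp
    have mge: "real m \<ge> 4*b/I + 128*(2*w+1)*K\<^sup>2/(I\<^sup>2*e)" unfolding m_def by linarith
    have m_pos: "m \<ge> 1" unfolding m_def by simp
    have m1: "real m * I / 4 \<ge> b"
    proof -
      have "real m \<ge> 4*b/I" using mge q2 by linarith
      then have "real m * I \<ge> 4 * b / I * I" using I_pos' by (intro mult_right_mono) auto
      then show ?thesis using I_pos' by simp
    qed
    have m2: "real m * (I\<^sup>2 * e) \<ge> 128*(2*w+1)*K\<^sup>2"
    proof -
      have "real m \<ge> 128*(2*w+1)*K\<^sup>2/(I\<^sup>2*e)" using mge q1 by linarith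
      then have "real m * (I\<^sup>2 * e) \<ge> 128*(2*w+1)*K\<^sup>2/(I\<^sup>2*e) * (I\<^sup>2 * e)"
        using I_pos' that by (intro mult_right_mono) auto
      then show ?thesis using I_pos' that by simp
    qed
    define A where "A = {w<..w+m}"
    have finA: "finite A" and cardA: "card A = m" and A_gt: "\<And>k. k \<in> A \<Longrightarrow> k > w"
      by (auto simp: A_def)
    define S where "S = (\<lambda>\<omega>. \<Sum>k\<in>A. W k \<omega>)"
    define Rs where "Rs = (\<lambda>\<omega>. \<Sum>k\<in>A. R k \<omega>)"
    define t where "t = real m * I / 4"
    have t_pos: "t > 0" using m_pos I_pos' by (simp add: t_def)
    have U_dec: "Ustat est p0 X w (w+m) \<omega> = S \<omega> + Rs \<omega> + real m * \<mu>" for \<omega>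
    proof -
      have "Ustat est p0 X w (w+m) \<omega> = (\<Sum>k\<in>A. W k \<omega> + R k \<omega> + \<mu>)"
        unfolding Ustat_def A_def W_def R_def Z_def by simp
      also have "\<dots> = S \<omega> + Rs \<omega> + real m * \<mu>"
        by (simp add: sum.distrib S_def Rs_def cardA)
      finally show ?thesis .
    qed
    have incl: "E \<subseteq> {\<omega>\<in>space M. t\<^sup>2 \<le> (S \<omega>)\<^sup>2} \<union> {\<omega>\<in>space M. t \<le> \<bar>Rs \<omega>\<bar>}"
    proof
      fix \<omega> assume "\<omega> \<in> E"
      then have sp: "\<omega> \<in> space M" and Ub: "Ustat est p0 X w (w+m) \<omega> < b"
        using m_pos unfolding E_def by auto
      show "\<omega> \<in> {\<omega>\<in>space M. t\<^sup>2 \<le> (S \<omega>)\<^sup>2} \<union> {\<omega>\<in>space M. t \<le> \<bar>Rs \<omega>\<bar>}"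
      proof (rule ccontr)
        assume "\<not> ?thesis"
        then have a1: "(S \<omega>)\<^sup>2 < t\<^sup>2" and a2: "\<bar>Rs \<omega>\<bar> < t" using sp by auto
        from a1 have "\<bar>S \<omega>\<bar> < t" using t_pos
          by (metis abs_of_pos power2_abs power_less_imp_less_base abs_ge_zero)
        moreover have "real m * \<mu> \<ge> real m * (3 * I / 4)" using \<mu>_ge by (intro mult_left_mono) auto
        ultimately have "Ustat est p0 X w (w+m) \<omega> > t" using a2 U_dec[of \<omega>] unfolding t_def by linarith
        then show False using Ub m1 unfolding t_def by linarith
      qed
    qed
    have S_meas: "S \<in> borel_measurable M" unfolding S_def using W_meas A_gt by (intro borel_measurable_sum) auto
    have R_meas: "R k \<in> borel_measurable M" if "k > w" for k
      unfolding R_def using Z_meas[OF that] by measurable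
    have Rs_meas: "Rs \<in> borel_measurable M" unfolding Rs_def using R_meas A_gt by (intro borel_measurable_sum) auto
    have S2eq: "(\<lambda>\<omega>. (S \<omega>)\<^sup>2) = (\<lambda>\<omega>. \<Sum>i\<in>A. \<Sum>j\<in>A. W i \<omega> * W j \<omega>)"
      by (simp add: S_def power2_eq_square sum_product)
    have intS2: "integrable M (\<lambda>\<omega>. (S \<omega>)\<^sup>2)"
      unfolding S2eq using WW_int A_gt by (intro Bochner_Integration.integrable_sum) auto
    have ES2: "integral\<^sup>L M (\<lambda>\<omega>. (S \<omega>)\<^sup>2) \<le> real m * ((2*w+1) * (4 * K\<^sup>2))"
    proof -
      have "integral\<^sup>L M (\<lambda>\<omega>. (S \<omega>)\<^sup>2) = (\<Sum>i\<in>A. \<Sum>j\<in>A. integral\<^sup>L M (\<lambda>\<omega>. W i \<omega> * W j \<omega>))"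
        unfolding S2eq
      proof (subst Bochner_Integration.integral_sum)
        show "integrable M (\<lambda>\<omega>. \<Sum>j\<in>A. W i \<omega> * W j \<omega>)" if "i \<in> A" for i
          using WW_int A_gt that by (intro Bochner_Integration.integrable_sum) auto
        show "(\<Sum>i\<in>A. integral\<^sup>L M (\<lambda>\<omega>. \<Sum>j\<in>A. W i \<omega> * W j \<omega>)) =
          (\<Sum>i\<in>A. \<Sum>j\<in>A. integral\<^sup>L M (\<lambda>\<omega>. W i \<omega> * W j \<omega>))"
          using WW_int A_gt by (intro sum.cong refl Bochner_Integration.integral_sum) auto
      qed
      also have "\<dots> \<le> (\<Sum>i\<in>A. (2*w+1) * (4 * K\<^sup>2))"
      proof (rule sum_mono)
        fix i assume iA: "i \<in> A"
        define B where "B = A \<inter> {i-w..i+w}"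
        have "(\<Sum>j\<in>A. integral\<^sup>L M (\<lambda>\<omega>. W i \<omega> * W j \<omega>)) = (\<Sum>j\<in>B. integral\<^sup>L M (\<lambda>\<omega>. W i \<omega> * W j \<omega>))"
        proof (rule sum.mono_neutral_right[OF finA])
          show "B \<subseteq> A" by (auto simp: B_def)
          show "\<forall>j\<in>A - B. integral\<^sup>L M (\<lambda>\<omega>. W i \<omega> * W j \<omega>) = 0"
          proof
            fix j assume j: "j \<in> A - B"
            then have jA: "j \<in> A" and "j \<notin> {i-w..i+w}" by (auto simp: B_def)
            then have "i + w < j \<or> j + w < i" by auto
            then show "integral\<^sup>L M (\<lambda>\<omega>. W i \<omega> * W j \<omega>) = 0"
            proof
              assume "i + w < j" then show ?thesis using W_indep A_gt iA by blast
            next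
              assume "j + w < i" then show ?thesis using W_indep[of j i] A_gt jA by (simp add: mult.commute)
            qed
          qed
        qed
        also have "\<dots> \<le> (\<Sum>j\<in>B. 4 * K\<^sup>2)"
          by (rule sum_mono) (use WW_le A_gt iA in \<open>auto simp: B_def\<close>)
        also have "\<dots> = real (card B) * (4 * K\<^sup>2)" by simp
        also have "\<dots> \<le> real (2*w+1) * (4 * K\<^sup>2)"
        proof (rule mult_right_mono)
          have "card B \<le> card {i-w..i+w}" by (rule card_mono) (auto simp: B_def)
          also have "\<dots> \<le> 2*w+1" by simp
          finally show "real (card B) \<le> real (2*w+1)" by simp
        qed simp
        finally show "(\<Sum>j\<in>A. integral\<^sup>L M (\<lambda>\<omega>. W i \<omega> * W j \<omega>)) \<le> (2*w+1) * (4 * K\<^sup>2)" by simp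
      qed
      also have "\<dots> = real m * ((2*w+1) * (4 * K\<^sup>2))" by (simp add: cardA)
      finally show ?thesis .
    qed
    have R_absint: "integral\<^sup>L M (\<lambda>\<omega>. \<bar>R k \<omega>\<bar>) = integral\<^sup>L D (\<lambda>v. \<bar>G v - cl K (G v)\<bar>)"
      "integrable M (\<lambda>\<omega>. \<bar>R k \<omega>\<bar>)" if "k > w" for k
    proof -
      have hm: "(\<lambda>z. \<bar>z - cl K z\<bar>) \<in> borel_measurable borel" by measurable
      show "integral\<^sup>L M (\<lambda>\<omega>. \<bar>R k \<omega>\<bar>) = integral\<^sup>L D (\<lambda>v. \<bar>G v - cl K (G v)\<bar>)"
        unfolding R_def using same_int(1)[OF that hm] by simp
      have "integrable D (\<lambda>v. \<bar>G v - cl K (G v)\<bar>)" using intG intclD by auto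
      then show "integrable M (\<lambda>\<omega>. \<bar>R k \<omega>\<bar>)"
        unfolding R_def using same_int(2)[OF that hm] by simp
    qed
    have R_int: "integrable M (R k)" if "k > w" for k
      using R_absint(2)[OF that] R_meas[OF that] by (simp add: integrable_abs_iff)
    have intRs: "integrable M (\<lambda>\<omega>. \<bar>Rs \<omega>\<bar>)" unfolding Rs_def using R_int A_gt by auto
    have ERs: "integral\<^sup>L M (\<lambda>\<omega>. \<bar>Rs \<omega>\<bar>) \<le> real m * \<delta>"
    proof -
      have "integral\<^sup>L M (\<lambda>\<omega>. \<bar>Rs \<omega>\<bar>) \<le> integral\<^sup>L M (\<lambda>\<omega>. \<Sum>k\<in>A. \<bar>R k \<omega>\<bar>)"
        using intRs R_absint(2) A_gt unfolding Rs_def by (intro integral_mono) (auto simp: sum_abs)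
      also have "\<dots> = (\<Sum>k\<in>A. integral\<^sup>L M (\<lambda>\<omega>. \<bar>R k \<omega>\<bar>))"
        using R_absint(2) A_gt by (intro Bochner_Integration.integral_sum) auto
      also have "\<dots> \<le> (\<Sum>k\<in>A. \<delta>)"
        using R_absint(1) A_gt Rint by (intro sum_mono) (simp add: less_imp_le)
      also have "\<dots> = real m * \<delta>" by (simp add: cardA)
      finally show ?thesis .
    qed
    have Mk1: "measure M {\<omega>\<in>space M. t\<^sup>2 \<le> (S \<omega>)\<^sup>2} \<le> integral\<^sup>L M (\<lambda>\<omega>. (S \<omega>)\<^sup>2) / t\<^sup>2"
      using intS2 t_pos by (intro integral_Markov_inequality_measure[where A="space M"]) auto
    have Mk2: "measure M {\<omega>\<in>space M. t \<le> \<bar>Rs \<omega>\<bar>} \<le> integral\<^sup>L M (\<lambda>\<omega>. \<bar>Rs \<omega>\<bar>) / t"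
      using intRs t_pos by (intro integral_Markov_inequality_measure[where A="space M"]) auto
    have "measure M E \<le> measure M ({\<omega>\<in>space M. t\<^sup>2 \<le> (S \<omega>)\<^sup>2} \<union> {\<omega>\<in>space M. t \<le> \<bar>Rs \<omega>\<bar>})"
      using incl S_meas Rs_meas by (intro finite_measure_mono) auto
    also have "\<dots> \<le> measure M {\<omega>\<in>space M. t\<^sup>2 \<le> (S \<omega>)\<^sup>2} + measure M {\<omega>\<in>space M. t \<le> \<bar>Rs \<omega>\<bar>}"
      using S_meas Rs_meas by (intro measure_Un_le) auto
    also have "\<dots> \<le> real m * ((2*w+1) * (4 * K\<^sup>2)) / t\<^sup>2 + real m * \<delta> / t"
      using Mk1 Mk2 ES2 ERs t_pos by (smt (verit) divide_right_mono zero_le_power2)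
    also have "\<dots> \<le> e/2 + e/2"
    proof (rule add_mono)
      have "real m * ((2*w+1) * (4 * K\<^sup>2)) / t\<^sup>2 = 64 * (2*w+1) * K\<^sup>2 / (real m * I\<^sup>2)"
        using m_pos I_pos' unfolding t_def by (simp add: field_simps power2_eq_square)
      also have "\<dots> \<le> e/2"
        using m2 m_pos I_pos' that by (simp add: field_simps)
      finally show "real m * ((2*w+1) * (4 * K\<^sup>2)) / t\<^sup>2 \<le> e/2" .
      have "real m * \<delta> / t = 4 * \<delta> / I"
        using m_pos I_pos' unfolding t_def by (simp add: field_simps)
      also have "\<dots> \<le> e/2" using I_pos' unfolding \<delta>_def by (simp add: field_simps)
      finally show "real m * \<delta> / t \<le> e/2" .
    qed
    finally show ?thesis by simp

  qed
  have E_eq: "E = (\<Inter>n. {\<omega>\<in>space M. w < n \<longrightarrow> Ustat est p0 X w n \<omega> < b})"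
    unfolding E_def by auto
  have Esets: "{\<omega>\<in>space M. w < n \<longrightarrow> Ustat est p0 X w n \<omega> < b} \<in> sets M" for n
  proof (cases "w < n")
    case True
    then show ?thesis using U_meas[OF True] by simp
  next
    case False
    then show ?thesis by simp
  qed
  have E_sets: "E \<in> sets M" unfolding E_eq
    by (rule sets.countable_INT[of "\<lambda>n. {\<omega>\<in>space M. w < n \<longrightarrow> Ustat est p0 X w n \<omega> < b}" UNIV]) (simp_all add: image_subset_iff Esets)
  have "measure M E = 0"
    using key by (metis measure_nonneg order.antisym field_le_epsilon add_0)
  then have "E \<in> null_sets M" using E_sets by (simp add: null_sets_def emeasure_eq_measure)
  then have AEn: "AE \<omega> in M. \<omega> \<notin> E" by (rule AE_not_in)
  show ?thesis using AEn
  proof (rule AE_mp, intro AE_I2 impI)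
    fix \<omega> assume "\<omega> \<in> space M" "\<omega> \<notin> E"
    then obtain n where n: "w < n" "b \<le> Ustat est p0 X w n \<omega>" unfolding E_def by (auto simp: not_less)
    then have "tau_u est p0 X w b \<omega> \<le> enat n" unfolding tau_u_def by (intro INF_lower) auto
    then show "tau_u est p0 X w b \<omega> < \<infinity>" using enat_ord_simps(4) le_less_trans by blast
  qed
qed

end
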